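(* Suppose Assumption A1 holds and $\mathbf z^*$ is an optimal solution of the dual problem (D). For every $i\neq j$ in $\{1,\dots,N\}$ and every $\mathbf h_1,\mathbf h_2\in\mathbb R^N$, $C_i(\mathbf z^*+t\mathbf h_1)\cap C_j(\mathbf z^*+t\mathbf h_2)\subset D_{ij}(\mathbf h_1,\mathbf h_2,t)$ and $$R\big(D_{ij}(\mathbf h_1,\mathbf h_2,t)\setminus C_j(\mathbf z^*+t\mathbf h_2)\big)=O(t^2),\qquad t\downarrow0.$$
   Context: Setting: $R$ is a Borel probability measure on $\mathbb R^d$, $P$ has finite support $\{\mathbf x_1,\dots,\mathbf x_N\}$ (distinct) with weights $p_i>0$. Assumption A1: $R$ compactly supported, absolutely continuous with density $\rho$ continuous on a compact convex $\mathcal Y\supset\operatorname{supp}R$ ($\rho=0$ off $\mathcal Y$), $\mathcal Y$ polyhedral or $\mathcal H^{d-1}(\partial\mathcal Y\cap H)=0$ for every hyperplane $H$. Dual problem (D): maximize over $\mathbf z\in\mathbb R^N$ the function $\sum_ip_iz_i+\int\min_i(\tfrac12\|\mathbf y-\mathbf x_i\|^2-z_i)dR(\mathbf y)$. For $\mathbf z\in\mathbb R^N$: $b_{ij}(\mathbf z)=(\|\mathbf x_i\|^2-\|\mathbf x_j\|^2)/2-z_i+z_j$, $C_i(\mathbf z)=\bigcap_{k\neq i}\{\mathbf y:\langle\mathbf x_i-\mathbf x_k,\mathbf y\rangle\ge b_{ik}(\mathbf z)\}$; $b_{ij}=b_{ij}(\mathbf z^* )$. For $t>0$, $D_{ij}(\mathbf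 h_1,\mathbf h_2,t)=C_i(\mathbf z^*+t\mathbf h_1)\cap\{\mathbf y:\langle\mathbf x_i-\mathbf x_j,\mathbf y\rangle-b_{ij}\le t(h_{2,j}-h_{2,i})\}$. *)

theory Defs
  imports "HOL-Probability.Probability" "HOL-Library.Landau_Symbols"
begin

text \<open>The normalising constant is omitted; it does not affect null sets.
  A nonempty set E contributes diam(E)^s (so for s = 0 each nonempty piece counts 1),
  the empty set contributes 0.\<close>

definition hausdorff_content :: "nat \<Rightarrow> real \<Rightarrow> 'a::metric_space set \<Rightarrow> ennreal" where
  "hausdorff_content s \<delta> A =
     (INF E \<in> {E :: nat \<Rightarrow> 'a set. A \<subseteq> (\<Union>n. E n) \<and> (\<forall>n. diameter (E n) \<le> \<delta>)}.
        (\<Sum>n. (if E n = {} then 0 else ennreal (diameter (E n) ^ s))))"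

definition hausdorff_measure :: "nat \<Rightarrow> 'a::metric_space set \<Rightarrow> ennreal" where
  "hausdorff_measure s A = (SUP \<delta> \<in> {0<..}. hausdorff_content s \<delta> A)"

definition dual_obj :: "nat \<Rightarrow> (nat \<Rightarrow> 'a::euclidean_space) \<Rightarrow> (nat \<Rightarrow> real) \<Rightarrow> 'a measure
    \<Rightarrow> (nat \<Rightarrow> real) \<Rightarrow> real" where
  "dual_obj N x p R z =
     (\<Sum>i<N. p i * z i) + (\<integral>y. Min ((\<lambda>i. (norm (y - x i))\<^sup>2 / 2 - z i) ` {..<N}) \<partial>R)"

definition bij_coef :: "(nat \<Rightarrow> 'a::euclidean_space) \<Rightarrow> (nat \<Rightarrow> real) \<Rightarrow> nat \<Rightarrow> nat \<Rightarrow> real" where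
  "bij_coef x z i j = ((norm (x i))\<^sup>2 - (norm (x j))\<^sup>2) / 2 - z i + z j"

definition cell :: "nat \<Rightarrow> (nat \<Rightarrow> 'a::euclidean_space) \<Rightarrow> (nat \<Rightarrow> real) \<Rightarrow> nat \<Rightarrow> 'a set" where
  "cell N x z i = {y. \<forall>k<N. k \<noteq> i \<longrightarrow> (x i - x k) \<bullet> y \<ge> bij_coef x z i k}"

definition Dset :: "nat \<Rightarrow> (nat \<Rightarrow> 'a::euclidean_space) \<Rightarrow> (nat \<Rightarrow> real) \<Rightarrow> nat \<Rightarrow> nat
    \<Rightarrow> (nat \<Rightarrow> real) \<Rightarrow> (nat \<Rightarrow> real) \<Rightarrow> real \<Rightarrow> 'a set" where
  "Dset N x zs i j h1 h2 t =
     cell N x (\<lambda>k. zs k + t * h1 k) i \<inter>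
     {y. (x i - x j) \<bullet> y - bij_coef x zs i j \<le> t * (h2 j - h2 i)}"

end

theory Submission
  imports Defs
begin

lemma emeasure_lborel_abs_le:
  fixes k c r :: real
  assumes "k \<noteq> 0" "r \<ge> 0"
  shows "emeasure lborel {s. \<bar>s * k + c\<bar> \<le> r} = ennreal (2 * r / \<bar>k\<bar>)"
proof -
  have "{s. \<bar>s * k + c\<bar> \<le> r} = {(-c/k) - r/\<bar>k\<bar> .. (-c/k) + r/\<bar>k\<bar>}"
  proof -
    have "\<bar>s * k + c\<bar> = \<bar>k\<bar> * \<bar>s - (-c/k)\<bar>" for s
      using assms by (simp add: abs_mult[symmetric] algebra_simps)
    moreover have "(\<bar>k\<bar> * \<bar>s - (-c/k)\<bar> \<le> r) = (\<bar>s - (-c/k)\<bar> \<le> r/\<bar>k\<bar>)" for s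
      using assms by (simp add: field_simps)
    ultimately show ?thesis by (auto simp: abs_le_iff)
  qed
  moreover have "(-c/k) - r/\<bar>k\<bar> \<le> (-c/k) + r/\<bar>k\<bar>" using assms by simp
  ultimately show ?thesis by (simp add: field_simps)
qed

lemma slab_fubini:
  fixes a b :: "'d::euclidean_space"
  assumes b1: "b1 \<in> Basis" and b2: "b2 \<in> Basis"
    and a1: "a \<bullet> b1 \<noteq> 0" and bb1: "b \<bullet> b1 = 0" and bb2: "b \<bullet> b2 \<noteq> 0"
    and M: "M \<ge> 0" and r: "r \<ge> 0"
  shows "emeasure lborel {y. \<bar>a \<bullet> y - \<alpha>\<bar> \<le> r \<and> \<bar>b \<bullet> y - \<beta>\<bar> \<le> r \<and> (\<forall>c\<in>Basis. \<bar>y \<bullet> c\<bar> \<le> M)}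
     \<le> ennreal (2 * r / \<bar>a \<bullet> b1\<bar> * (2 * r / \<bar>b \<bullet> b2\<bar>) * (2 * M) ^ (DIM('d) - 2))"
proof -
  interpret P: product_sigma_finite "\<lambda>_::'d. (lborel::real measure)"
    by (simp add: product_sigma_finite_def sigma_finite_lborel)
  define S where "S = {y. \<bar>a \<bullet> y - \<alpha>\<bar> \<le> r \<and> \<bar>b \<bullet> y - \<beta>\<bar> \<le> r \<and> (\<forall>c\<in>Basis. \<bar>y \<bullet> c\<bar> \<le> M)}"
  have b12: "b1 \<noteq> b2" using bb1 bb2 by auto
  define Rest where "Rest = Basis - {b1, b2}"
  have finR: "finite Rest" by (simp add: Rest_def)
  have BR: "Basis = insert b1 (insert b2 Rest)" using b1 b2 by (auto simp: Rest_def)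
  have nb1: "b1 \<notin> insert b2 Rest" using b12 by (auto simp: Rest_def)
  have nb2: "b2 \<notin> Rest" by (auto simp: Rest_def)
  have cardR: "card Rest = DIM('d) - 2"
    using b1 b2 b12 by (simp add: Rest_def card_Diff_subset)
  have Sclosed: "S \<in> sets borel"
    unfolding S_def by measurable
  have coord: "(\<Sum>c\<in>Basis. f c *\<^sub>R c) \<bullet> d = f d" if "d \<in> Basis" for f :: "'d \<Rightarrow> real" and d
    using that by (simp add: inner_sum_left inner_Basis if_distrib cong: if_cong)
  have lin: "v \<bullet> (\<Sum>c\<in>Basis. f c *\<^sub>R c) = (\<Sum>c\<in>Basis. f c * (v \<bullet> c))" for f :: "'d \<Rightarrow> real" and v
    by (simp add: inner_sum_right)
  let ?A = "\<lambda>x. (\<Sum>c\<in>insert b2 Rest. x c * (a \<bullet> c))"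
  let ?B = "\<lambda>x. (\<Sum>c\<in>insert b2 Rest. x c * (b \<bullet> c))"
  let ?B' = "\<lambda>x. (\<Sum>c\<in>Rest. x c * (b \<bullet> c))"
  define T where "T = {x. \<bar>?B x - \<beta>\<bar> \<le> r \<and> (\<forall>c\<in>insert b2 Rest. \<bar>x c\<bar> \<le> M)}"
  define U where "U = {x. (\<forall>c\<in>Rest. \<bar>x c\<bar> \<le> M)}"
  have "emeasure lborel S = (\<integral>\<^sup>+y. indicator S y \<partial>lborel)"
    using Sclosed by simp
  also have "\<dots> = (\<integral>\<^sup>+f. indicator S (\<Sum>c\<in>Basis. f c *\<^sub>R c) \<partial>(Pi\<^sub>M Basis (\<lambda>_. lborel)))"
    apply (subst lborel_eq)
    apply (rule nn_integral_distr)
     apply (measurable; fail)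
    using Sclosed by simp
  also have "\<dots> = (\<integral>\<^sup>+x. (\<integral>\<^sup>+s. indicator S (\<Sum>c\<in>Basis. (x(b1 := s)) c *\<^sub>R c) \<partial>lborel)
       \<partial>(Pi\<^sub>M (insert b2 Rest) (\<lambda>_. lborel)))"
    unfolding BR
    by (rule P.product_nn_integral_insert) (use finR nb1 Sclosed in \<open>auto simp: BR[symmetric]\<close>)
  also have "\<dots> \<le> (\<integral>\<^sup>+x. ennreal (2 * r / \<bar>a \<bullet> b1\<bar>) * indicator T x
       \<partial>(Pi\<^sub>M (insert b2 Rest) (\<lambda>_. lborel)))"
  proof (rule nn_integral_mono)
    fix x :: "'d \<Rightarrow> real"
    have eqA: "a \<bullet> (\<Sum>c\<in>Basis. (x(b1 := s)) c *\<^sub>R c) = s * (a \<bullet> b1) + ?A x" for s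
    proof -
      have "a \<bullet> (\<Sum>c\<in>Basis. (x(b1 := s)) c *\<^sub>R c) = s * (a \<bullet> b1) + (\<Sum>c\<in>insert b2 Rest. (x(b1 := s)) c * (a \<bullet> c))"
        using finR nb1 unfolding BR by (simp add: inner_sum_right inner_add_right del: sum.insert) (subst sum.insert; simp add: inner_add_right inner_sum_right)
      also have "(\<Sum>c\<in>insert b2 Rest. (x(b1 := s)) c * (a \<bullet> c)) = ?A x"
        by (rule sum.cong) (use nb1 in auto)
      finally show ?thesis .
    qed
    have eqB: "b \<bullet> (\<Sum>c\<in>Basis. (x(b1 := s)) c *\<^sub>R c) = ?B x" for s
    proof -
      have "b \<bullet> (\<Sum>c\<in>Basis. (x(b1 := s)) c *\<^sub>R c) = s * (b \<bullet> b1) + (\<Sum>c\<in>insert b2 Rest. (x(b1 := s)) c * (b \<bullet> c))"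
        using finR nb1 unfolding BR by (simp add: inner_sum_right inner_add_right del: sum.insert) (subst sum.insert; simp add: inner_add_right inner_sum_right)
      also have "(\<Sum>c\<in>insert b2 Rest. (x(b1 := s)) c * (b \<bullet> c)) = ?B x"
        by (rule sum.cong) (use nb1 in auto)
      finally show ?thesis using bb1 by simp
    qed
    have "indicator S (\<Sum>c\<in>Basis. (x(b1 := s)) c *\<^sub>R c)
        \<le> (indicator T x * indicator {s. \<bar>s * (a \<bullet> b1) + (?A x - \<alpha>)\<bar> \<le> r} s :: ennreal)" for s
    proof (cases "(\<Sum>c\<in>Basis. (x(b1 := s)) c *\<^sub>R c) \<in> S")
      case True
      then have y1: "\<bar>s * (a \<bullet> b1) + ?A x - \<alpha>\<bar> \<le> r" and y2: "\<bar>?B x - \<beta>\<bar> \<le> r"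
        and y3: "\<forall>c\<in>Basis. \<bar>(x(b1 := s)) c\<bar> \<le> M"
        unfolding S_def mem_Collect_eq eqA eqB using coord[of _ "x(b1:=s)"] by auto
      have "\<forall>c\<in>insert b2 Rest. \<bar>x c\<bar> \<le> M"
      proof
        fix c assume c: "c \<in> insert b2 Rest"
        then have "c \<in> Basis" "c \<noteq> b1" using BR nb1 by auto
        then show "\<bar>x c\<bar> \<le> M" using y3 by force
      qed
      then have "x \<in> T" "\<bar>s * (a \<bullet> b1) + (?A x - \<alpha>)\<bar> \<le> r"
        using y1 y2 unfolding T_def by (auto simp: add_diff_eq)
      then show ?thesis by (simp add: indicator_def)
    qed simp
    then have "(\<integral>\<^sup>+s. indicator S (\<Sum>c\<in>Basis. (x(b1 := s)) c *\<^sub>R c) \<partial>lborel)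
        \<le> (\<integral>\<^sup>+s. indicator T x * indicator {s. \<bar>s * (a \<bullet> b1) + (?A x - \<alpha>)\<bar> \<le> r} s \<partial>lborel)"
      by (intro nn_integral_mono) auto
    also have "\<dots> = indicator T x * emeasure lborel {s. \<bar>s * (a \<bullet> b1) + (?A x - \<alpha>)\<bar> \<le> r}"
      by (subst nn_integral_cmult) auto
    also have "\<dots> = ennreal (2 * r / \<bar>a \<bullet> b1\<bar>) * indicator T x"
      using a1 r by (simp add: emeasure_lborel_abs_le mult.commute)
    finally show "(\<integral>\<^sup>+s. indicator S (\<Sum>c\<in>Basis. (x(b1 := s)) c *\<^sub>R c) \<partial>lborel)
        \<le> ennreal (2 * r / \<bar>a \<bullet> b1\<bar>) * indicator T x" .
  qed
  also have "\<dots> = ennreal (2 * r / \<bar>a \<bullet> b1\<bar>) * (\<integral>\<^sup>+x. indicator T x \<partial>(Pi\<^sub>M (insert b2 Rest) (\<lambda>_. lborel)))"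
    by (rule nn_integral_cmult) (use finR in \<open>simp add: T_def\<close>)
  also have "(\<integral>\<^sup>+x. indicator T x \<partial>(Pi\<^sub>M (insert b2 Rest) (\<lambda>_. lborel)))
      = (\<integral>\<^sup>+x. (\<integral>\<^sup>+s. indicator T (x(b2 := s)) \<partial>lborel) \<partial>(Pi\<^sub>M Rest (\<lambda>_. lborel)))"
    by (rule P.product_nn_integral_insert) (use finR nb2 in \<open>auto simp: T_def\<close>)
  also have "\<dots> \<le> (\<integral>\<^sup>+x. ennreal (2 * r / \<bar>b \<bullet> b2\<bar>) * indicator U x \<partial>(Pi\<^sub>M Rest (\<lambda>_. lborel)))"
  proof (rule nn_integral_mono)
    fix x :: "'d \<Rightarrow> real"
    have eqB: "?B (x(b2 := s)) = s * (b \<bullet> b2) + ?B' x" for s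
    proof -
      have "?B (x(b2 := s)) = s * (b \<bullet> b2) + (\<Sum>c\<in>Rest. (x(b2 := s)) c * (b \<bullet> c))"
        using finR nb2 by (subst sum.insert) auto
      also have "(\<Sum>c\<in>Rest. (x(b2 := s)) c * (b \<bullet> c)) = ?B' x"
        by (rule sum.cong) (use nb2 in auto)
      finally show ?thesis .
    qed
    have "indicator T (x(b2 := s)) \<le> (indicator U x * indicator {s. \<bar>s * (b \<bullet> b2) + (?B' x - \<beta>)\<bar> \<le> r} s :: ennreal)" for s
    proof (cases "x(b2 := s) \<in> T")
      case True
      then have y1: "\<bar>s * (b \<bullet> b2) + ?B' x - \<beta>\<bar> \<le> r" and y3: "\<forall>c\<in>insert b2 Rest. \<bar>(x(b2 := s)) c\<bar> \<le> M"
        unfolding T_def mem_Collect_eq eqB by auto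
      have "\<forall>c\<in>Rest. \<bar>x c\<bar> \<le> M"
      proof
        fix c assume c: "c \<in> Rest"
        then have "c \<noteq> b2" using nb2 by auto
        then show "\<bar>x c\<bar> \<le> M" using y3 c by force
      qed
      then have "x \<in> U" "\<bar>s * (b \<bullet> b2) + (?B' x - \<beta>)\<bar> \<le> r"
        using y1 unfolding U_def by (auto simp: add_diff_eq)
      then show ?thesis by (simp add: indicator_def)
    qed simp
    then have "(\<integral>\<^sup>+s. indicator T (x(b2 := s)) \<partial>lborel)
        \<le> (\<integral>\<^sup>+s. indicator U x * indicator {s. \<bar>s * (b \<bullet> b2) + (?B' x - \<beta>)\<bar> \<le> r} s \<partial>lborel)"
      by (intro nn_integral_mono) auto
    also have "\<dots> = indicator U x * emeasure lborel {s. \<bar>s * (b \<bullet> b2) + (?B' x - \<beta>)\<bar> \<le> r}"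
      by (subst nn_integral_cmult) auto
    also have "\<dots> = ennreal (2 * r / \<bar>b \<bullet> b2\<bar>) * indicator U x"
      using bb2 r by (simp add: emeasure_lborel_abs_le mult.commute)
    finally show "(\<integral>\<^sup>+s. indicator T (x(b2 := s)) \<partial>lborel) \<le> ennreal (2 * r / \<bar>b \<bullet> b2\<bar>) * indicator U x" .
  qed
  also have "\<dots> = ennreal (2 * r / \<bar>b \<bullet> b2\<bar>) * emeasure (Pi\<^sub>M Rest (\<lambda>_. lborel)) (Pi\<^sub>E Rest (\<lambda>_. {-M..M}))"
  proof -
    have "U \<inter> space (Pi\<^sub>M Rest (\<lambda>_. lborel)) = Pi\<^sub>E Rest (\<lambda>_. {-M..M})"
      by (auto simp: U_def space_PiM PiE_def Pi_def abs_le_iff)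
    moreover have "(\<integral>\<^sup>+x. indicator U x \<partial>(Pi\<^sub>M Rest (\<lambda>_. lborel))) = emeasure (Pi\<^sub>M Rest (\<lambda>_. lborel)) (U \<inter> space (Pi\<^sub>M Rest (\<lambda>_. lborel)))"
    proof -
      have mU: "{x\<in>space (Pi\<^sub>M Rest (\<lambda>_. lborel)). \<forall>c\<in>Rest. \<bar>x c\<bar> \<le> M} \<in> sets (Pi\<^sub>M Rest (\<lambda>_. lborel))"
        using finR by measurable
      have "(\<integral>\<^sup>+x. indicator U x \<partial>(Pi\<^sub>M Rest (\<lambda>_. lborel))) = (\<integral>\<^sup>+x. indicator (U \<inter> space (Pi\<^sub>M Rest (\<lambda>_. lborel))) x \<partial>(Pi\<^sub>M Rest (\<lambda>_. lborel)))"
        by (rule nn_integral_cong) (simp add: indicator_def)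
      also have "\<dots> = emeasure (Pi\<^sub>M Rest (\<lambda>_. lborel)) (U \<inter> space (Pi\<^sub>M Rest (\<lambda>_. lborel)))"
        by (rule nn_integral_indicator) (use mU in \<open>simp add: U_def Int_def conj_commute\<close>)
      finally show ?thesis .
    qed
    ultimately show ?thesis
      by (subst nn_integral_cmult) (use finR in \<open>auto simp: U_def\<close>)
  qed
  also have "emeasure (Pi\<^sub>M Rest (\<lambda>_. lborel)) (Pi\<^sub>E Rest (\<lambda>_. {-M..M})) = ennreal ((2*M) ^ (DIM('d) - 2))"
    using finR M by (simp add: P.emeasure_PiM cardR[symmetric] prod_ennreal ennreal_power power_mult_distrib)
  finally show ?thesis
    unfolding S_def using r M
    by (simp add: ennreal_mult'[symmetric] mult.assoc mult_mono ennreal_mult_le_mult_iff)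
qed


lemma slab_general:
  fixes a b :: "'d::euclidean_space"
  assumes a0: "a \<noteq> 0" and np: "\<not> (\<exists>\<mu>. b = \<mu> *\<^sub>R a)" and M: "M \<ge> 0"
  obtains K where "K \<ge> 0" "\<And>r \<alpha> \<beta>. r \<ge> 0 \<Longrightarrow>
     emeasure lborel {y. \<bar>a \<bullet> y - \<alpha>\<bar> \<le> r \<and> \<bar>b \<bullet> y - \<beta>\<bar> \<le> r \<and> (\<forall>c\<in>Basis. \<bar>y \<bullet> c\<bar> \<le> M)}
       \<le> ennreal (K * r\<^sup>2)"
proof -
  obtain b1 where b1: "b1 \<in> Basis" "a \<bullet> b1 \<noteq> 0"
    using a0 euclidean_all_zero_iff by blast
  define \<mu> where "\<mu> = (b \<bullet> b1) / (a \<bullet> b1)"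
  define b' where "b' = b - \<mu> *\<^sub>R a"
  have bb1: "b' \<bullet> b1 = 0" using b1 by (simp add: b'_def \<mu>_def inner_diff_left)
  have "b' \<noteq> 0" using np by (auto simp: b'_def)
  then obtain b2 where b2: "b2 \<in> Basis" "b' \<bullet> b2 \<noteq> 0"
    using euclidean_all_zero_iff by blast
  define K where "K = 2 * (1 + \<bar>\<mu>\<bar>) / \<bar>a \<bullet> b1\<bar> * (2 * (1 + \<bar>\<mu>\<bar>) / \<bar>b' \<bullet> b2\<bar>) * (2 * M) ^ (DIM('d) - 2)"
  show thesis
  proof
    show "K \<ge> 0" unfolding K_def using M by simp
    fix r \<alpha> \<beta> :: real assume r: "r \<ge> 0"
    define r' where "r' = (1 + \<bar>\<mu>\<bar>) * r"
    have rr': "r \<le> r'" using r by (simp add: r'_def mult_le_cancel_right1)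
    have "{y. \<bar>a \<bullet> y - \<alpha>\<bar> \<le> r \<and> \<bar>b \<bullet> y - \<beta>\<bar> \<le> r \<and> (\<forall>c\<in>Basis. \<bar>y \<bullet> c\<bar> \<le> M)}
       \<subseteq> {y. \<bar>a \<bullet> y - \<alpha>\<bar> \<le> r' \<and> \<bar>b' \<bullet> y - (\<beta> - \<mu> * \<alpha>)\<bar> \<le> r' \<and> (\<forall>c\<in>Basis. \<bar>y \<bullet> c\<bar> \<le> M)}"
    proof safe
      fix y assume y: "\<bar>a \<bullet> y - \<alpha>\<bar> \<le> r" "\<bar>b \<bullet> y - \<beta>\<bar> \<le> r"
      show "\<bar>a \<bullet> y - \<alpha>\<bar> \<le> r'" using y rr' by simp
      have "b' \<bullet> y - (\<beta> - \<mu> * \<alpha>) = (b \<bullet> y - \<beta>) - \<mu> * (a \<bullet> y - \<alpha>)"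
        by (simp add: b'_def inner_diff_left algebra_simps)
      also have "\<bar>\<dots>\<bar> \<le> \<bar>b \<bullet> y - \<beta>\<bar> + \<bar>\<mu>\<bar> * \<bar>a \<bullet> y - \<alpha>\<bar>"
        by (metis abs_mult abs_triangle_ineq4)
      also have "\<dots> \<le> r + \<bar>\<mu>\<bar> * r"
        using y by (intro add_mono mult_left_mono) auto
      finally show "\<bar>b' \<bullet> y - (\<beta> - \<mu> * \<alpha>)\<bar> \<le> r'" by (simp add: r'_def algebra_simps)
    qed
    then have "emeasure lborel {y. \<bar>a \<bullet> y - \<alpha>\<bar> \<le> r \<and> \<bar>b \<bullet> y - \<beta>\<bar> \<le> r \<and> (\<forall>c\<in>Basis. \<bar>y \<bullet> c\<bar> \<le> M)}
       \<le> emeasure lborel {y. \<bar>a \<bullet> y - \<alpha>\<bar> \<le> r' \<and> \<bar>b' \<bullet> y - (\<beta> - \<mu> * \<alpha>)\<bar> \<le> r' \<and> (\<forall>c\<in>Basis. \<bar>y \<bullet> c\<bar> \<le> M)}"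
      by (rule emeasure_mono) measurable
    also have "\<dots> \<le> ennreal (2 * r' / \<bar>a \<bullet> b1\<bar> * (2 * r' / \<bar>b' \<bullet> b2\<bar>) * (2 * M) ^ (DIM('d) - 2))"
      by (rule slab_fubini) (use b1 b2 bb1 M r in \<open>auto simp: r'_def\<close>)
    also have "2 * r' / \<bar>a \<bullet> b1\<bar> * (2 * r' / \<bar>b' \<bullet> b2\<bar>) * (2 * M) ^ (DIM('d) - 2) = K * r\<^sup>2"
      by (simp add: K_def r'_def power2_eq_square field_simps)
    finally show "emeasure lborel {y. \<bar>a \<bullet> y - \<alpha>\<bar> \<le> r \<and> \<bar>b \<bullet> y - \<beta>\<bar> \<le> r \<and> (\<forall>c\<in>Basis. \<bar>y \<bullet> c\<bar> \<le> M)}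
       \<le> ennreal (K * r\<^sup>2)" .
  qed
qed


lemma gap_identity:
  fixes x :: "nat \<Rightarrow> 'd::euclidean_space"
  shows "((norm (y - x l))\<^sup>2 / 2 - z l) - ((norm (y - x m))\<^sup>2 / 2 - z m) = (x m - x l) \<bullet> y - bij_coef x z m l"
  unfolding bij_coef_def power2_norm_eq_inner
  by (simp add: inner_diff_left inner_diff_right inner_commute field_simps)

lemma min_shift_bound:
  fixes G :: "nat \<Rightarrow> real"
  assumes I: "finite I" "m \<in> I" and d: "\<delta> \<ge> 0"
  shows "Min ((\<lambda>i. G i - (if i = m then \<delta> else 0)) ` I) \<ge> Min (G ` I) - \<delta>"
    and "(\<exists>l\<in>I. l \<noteq> m \<and> G l \<le> G m - \<delta>) \<Longrightarrow> Min ((\<lambda>i. G i - (if i = m then \<delta> else 0)) ` I) \<ge> Min (G ` I)"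
proof -
  have ne: "I \<noteq> {}" using I by auto
  obtain i0 where i0: "i0 \<in> I" "Min ((\<lambda>i. G i - (if i = m then \<delta> else 0)) ` I) = G i0 - (if i0 = m then \<delta> else 0)"
  proof -
    have "Min ((\<lambda>i. G i - (if i = m then \<delta> else 0)) ` I) \<in> (\<lambda>i. G i - (if i = m then \<delta> else 0)) ` I"
      by (rule Min_in) (use I ne in auto)
    then show ?thesis using that by auto
  qed
  have le: "Min (G ` I) \<le> G i" if "i \<in> I" for i using I that by simp
  show "Min ((\<lambda>i. G i - (if i = m then \<delta> else 0)) ` I) \<ge> Min (G ` I) - \<delta>"
    using i0 le[of i0] d by auto
  assume "\<exists>l\<in>I. l \<noteq> m \<and> G l \<le> G m - \<delta>"
  then obtain l where l: "l \<in> I" "G l \<le> G m - \<delta>" by blast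
  show "Min ((\<lambda>i. G i - (if i = m then \<delta> else 0)) ` I) \<ge> Min (G ` I)"
    using i0 le[of i0] le[of l] l by (auto split: if_splits)
qed

lemma opt_cell_mass:
  fixes R :: "'d::euclidean_space measure" and x :: "nat \<Rightarrow> 'd"
  assumes fin: "finite_measure R" and sR: "sets R = sets borel"
    and integ: "\<And>z. integrable R (\<lambda>y. Min ((\<lambda>i. (norm (y - x i))\<^sup>2 / 2 - z i) ` {..<N}))"
    and opt: "\<And>z. dual_obj N x p R z \<le> dual_obj N x p R zs"
    and m: "m < N"
  shows "p m \<le> measure R (cell N x zs m)"
proof (rule ccontr)
  assume "\<not> ?thesis"
  then have lt: "measure R (cell N x zs m) < p m" by simp
  interpret finite_measure R by fact
  define A where "A n = {y. \<forall>l<N. l \<noteq> m \<longrightarrow> bij_coef x zs m l - 1 / Suc n < (x m - x l) \<bullet> y}" for n :: nat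
  have Ameas: "A n \<in> sets R" for n
    unfolding sR A_def by measurable
  have "decseq A"
  proof (rule decseq_SucI)
    fix n
    have "1 / real (Suc (Suc n)) \<le> 1 / Suc n" by (simp add: frac_le)
    then show "A (Suc n) \<subseteq> A n" unfolding A_def by force
  qed
  have Ainter: "(\<Inter>n. A n) = cell N x zs m"
  proof safe
    fix y assume y: "y \<in> (\<Inter>n. A n)"
    show "y \<in> cell N x zs m"
      unfolding cell_def
    proof (safe)
      fix l assume l: "l < N" "l \<noteq> m"
      show "bij_coef x zs m l \<le> (x m - x l) \<bullet> y"
      proof (rule ccontr)
        assume "\<not> ?thesis"
        then obtain n where "1 / real (Suc n) < bij_coef x zs m l - (x m - x l) \<bullet> y"
          using reals_Archimedean[of "bij_coef x zs m l - (x m - x l) \<bullet> y"]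
          by (auto simp: inverse_eq_divide)
        moreover have "y \<in> A n" using y by auto
        ultimately show False using l unfolding A_def by force
      qed
    qed
  next
    fix y n assume "y \<in> cell N x zs m"
    then show "y \<in> A n" unfolding cell_def A_def
      by (auto intro: less_le_trans[rotated] simp: not_le)
  qed
  have "(\<lambda>n. measure R (A n)) \<longlonglongrightarrow> measure R (cell N x zs m)"
    using finite_Lim_measure_decseq[of A] Ameas \<open>decseq A\<close> Ainter by auto
  then have "eventually (\<lambda>n. measure R (A n) < p m) sequentially"
    using lt by (rule order_tendstoD)
  then obtain n where An: "measure R (A n) < p m"
    by (auto dest: eventually_happens)
  define \<delta> :: real where "\<delta> = 1 / Suc n"
  have d0: "\<delta> > 0" by (simp add: \<delta>_def)
  define z' where "z' i = zs i + (if i = m then \<delta> else 0)" for i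
  define F where "F z y = Min ((\<lambda>i. (norm (y - x i))\<^sup>2 / 2 - z i) ` {..<N})" for z y
  have pw: "F zs y - \<delta> * indicator (A n) y \<le> F z' y" for y
  proof -
    let ?G = "\<lambda>i. (norm (y - x i))\<^sup>2 / 2 - zs i"
    have eq: "F z' y = Min ((\<lambda>i. ?G i - (if i = m then \<delta> else 0)) ` {..<N})"
      unfolding F_def z'_def by (simp add: algebra_simps)
    show ?thesis
    proof (cases "y \<in> A n")
      case True
      then show ?thesis using min_shift_bound(1)[of "{..<N}" m \<delta> ?G] m d0 eq
        by (simp add: F_def)
    next
      case False
      then obtain l where l: "l < N" "l \<noteq> m" "(x m - x l) \<bullet> y \<le> bij_coef x zs m l - \<delta>"
        unfolding A_def \<delta>_def by (auto simp: not_less)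
      then have "?G l \<le> ?G m - \<delta>" using gap_identity[of y x l zs m] by simp
      then have "Min (?G ` {..<N}) \<le> F z' y"
        using min_shift_bound(2)[of "{..<N}" m \<delta> ?G] m d0 eq l by auto
      then show ?thesis using False by (simp add: F_def)
    qed
  qed
  have iA: "integrable R (indicator (A n) :: 'd \<Rightarrow> real)"
    using Ameas by (intro integrable_real_indicator) (auto simp: less_top[symmetric])
  have "(\<integral>y. F zs y \<partial>R) - \<delta> * measure R (A n) = (\<integral>y. F zs y - \<delta> * indicator (A n) y \<partial>R)"
    using integ[of zs] iA Ameas by (simp add: F_def sets.Int_space_eq2)
  also have "\<dots> \<le> (\<integral>y. F z' y \<partial>R)"
    by (rule integral_mono) (use integ iA pw in \<open>auto simp: F_def\<close>)
  finally have intle: "(\<integral>y. F zs y \<partial>R) - \<delta> * measure R (A n) \<le> (\<integral>y. F z' y \<partial>R)" .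
  have sumeq: "(\<Sum>i<N. p i * z' i) = (\<Sum>i<N. p i * zs i) + p m * \<delta>"
  proof -
    have "(\<Sum>i<N. p i * z' i) = (\<Sum>i<N. p i * zs i + (if i = m then p m * \<delta> else 0))"
      by (rule sum.cong) (auto simp: z'_def algebra_simps)
    also have "\<dots> = (\<Sum>i<N. p i * zs i) + p m * \<delta>"
      using m by (simp add: sum.distrib)
    finally show ?thesis .
  qed
  have "dual_obj N x p R zs < dual_obj N x p R zs + \<delta> * (p m - measure R (A n))"
    using d0 An by simp
  also have "\<dots> \<le> dual_obj N x p R z'"
    unfolding dual_obj_def sumeq using intle by (simp add: F_def algebra_simps)
  finally show False using opt[of z'] by simp
qed


lemma hyperplane_null_lborel:
  fixes a :: "'d::euclidean_space"
  assumes "a \<noteq> 0"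
  shows "{y. a \<bullet> y = \<beta>} \<in> null_sets lborel"
proof -
  have "negligible {y. a \<bullet> y = \<beta>}" using assms by (intro negligible_hyperplane) auto
  then have "{y. a \<bullet> y = \<beta>} \<in> null_sets lebesgue" by (simp add: negligible_iff_null_sets)
  moreover have "{y. a \<bullet> y = \<beta>} \<in> sets lborel" by measurable
  ultimately show ?thesis using null_sets_completion_iff by blast
qed

lemma bij_coef_rel:
  "bij_coef x z j i = - bij_coef x z i j"
  "bij_coef x z i j + bij_coef x z j k = bij_coef x z i k"
  unfolding bij_coef_def by (simp_all add: field_simps)

lemma cell_borel: "cell N x z i \<in> sets borel"
  unfolding cell_def by measurable

lemma Dset_borel: "Dset N x zs i j h1 h2 t \<in> sets borel"
  unfolding Dset_def using cell_borel by measurable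


lemma R_slab_bound:
  fixes \<rho> :: "'d::euclidean_space \<Rightarrow> real"
  assumes rho_meas: "\<rho> \<in> borel_measurable borel" and rho_nonneg: "\<And>y. \<rho> y \<ge> 0"
    and rho_zero: "\<And>y. y \<notin> Y \<Longrightarrow> \<rho> y = 0" and Bp: "\<And>y. y \<in> Y \<Longrightarrow> \<rho> y \<le> B" and B0: "B \<ge> 0"
    and S: "S \<in> sets borel" and Q: "Q \<in> sets borel" and SQ: "S \<inter> Y \<subseteq> Q"
    and c0: "c \<ge> 0" and Qc: "emeasure lborel Q \<le> ennreal c"
  shows "measure (density lborel (\<lambda>y. ennreal (\<rho> y))) S \<le> B * c"
proof -
  have "emeasure (density lborel (\<lambda>y. ennreal (\<rho> y))) S = (\<integral>\<^sup>+y. ennreal (\<rho> y) * indicator S y \<partial>lborel)"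
    using S rho_meas by (subst emeasure_density) auto
  also have "\<dots> \<le> (\<integral>\<^sup>+y. ennreal B * indicator Q y \<partial>lborel)"
  proof (rule nn_integral_mono)
    fix y
    show "ennreal (\<rho> y) * indicator S y \<le> ennreal B * indicator Q y"
    proof (cases "y \<in> S \<and> y \<in> Y")
      case True
      then show ?thesis using SQ Bp by (auto simp: indicator_def intro!: ennreal_leI)
    next
      case False
      then show ?thesis using rho_zero by (auto simp: indicator_def)
    qed
  qed
  also have "\<dots> = ennreal B * emeasure lborel Q"
    using Q by (subst nn_integral_cmult_indicator) auto
  also have "\<dots> \<le> ennreal B * ennreal c"
    using Qc by (rule mult_left_mono) simp
  also have "\<dots> = ennreal (B * c)" using B0 c0 by (simp add: ennreal_mult)
  finally show ?thesis
    unfolding measure_def using B0 c0 by (intro enn2real_leI) auto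
qed

lemma bij_shift: "bij_coef x (\<lambda>k. zs k + t * h k) i k = bij_coef x zs i k - t * h i + t * h k"
  unfolding bij_coef_def by simp

lemma R_null_hyperplane:
  fixes \<rho> :: "'d::euclidean_space \<Rightarrow> real" and a :: 'd
  assumes rho_meas: "\<rho> \<in> borel_measurable borel" and a: "a \<noteq> 0"
  shows "measure (density lborel (\<lambda>y. ennreal (\<rho> y))) {y. a \<bullet> y = \<beta>} = 0"
proof -
  have H: "{y. a \<bullet> y = \<beta>} \<in> null_sets lborel" by (rule hyperplane_null_lborel[OF a])
  have "emeasure (density lborel (\<lambda>y. ennreal (\<rho> y))) {y. a \<bullet> y = \<beta>}
      = (\<integral>\<^sup>+y. ennreal (\<rho> y) * indicator {y. a \<bullet> y = \<beta>} y \<partial>lborel)"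
    using rho_meas H by (subst emeasure_density) auto
  also have "\<dots> = 0" by (rule nn_integral_null_set[OF H])
  finally show ?thesis by (simp add: measure_def)
qed

theorem mainTheorem8:
  fixes \<rho> :: "'d::euclidean_space \<Rightarrow> real"
    and Y :: "'d set"
    and N :: nat and x :: "nat \<Rightarrow> 'd" and p :: "nat \<Rightarrow> real"
    and zs :: "nat \<Rightarrow> real"
  defines "R \<equiv> density lborel (\<lambda>y. ennreal (\<rho> y))"
  assumes rho_meas: "\<rho> \<in> borel_measurable borel"
    and rho_nonneg: "\<And>y. \<rho> y \<ge> 0"
    and R_prob: "prob_space R"
    and Y_compact: "compact Y" and Y_convex: "convex Y"
    and rho_cont: "continuous_on Y \<rho>"
    and rho_zero: "\<And>y. y \<notin> Y \<Longrightarrow> \<rho> y = 0"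
    and Y_bdry: "polyhedron Y \<or>
       (\<forall>a b. a \<noteq> 0 \<longrightarrow>
          hausdorff_measure (DIM('d) - 1) (frontier Y \<inter> {y. a \<bullet> y = b}) = 0)"
    and x_distinct: "inj_on x {..<N}"
    and p_pos: "\<And>i. i < N \<Longrightarrow> p i > 0"
    and p_sum: "(\<Sum>i<N. p i) = 1"
    and opt: "\<And>z. dual_obj N x p R z \<le> dual_obj N x p R zs"
  shows "\<forall>i<N. \<forall>j<N. i \<noteq> j \<longrightarrow> (\<forall>h1 h2 :: nat \<Rightarrow> real.
           (\<forall>t>0. cell N x (\<lambda>k. zs k + t * h1 k) i \<inter> cell N x (\<lambda>k. zs k + t * h2 k) j
                    \<subseteq> Dset N x zs i j h1 h2 t)
         \<and> (\<lambda>t. measure R (Dset N x zs i j h1 h2 t - cell N x (\<lambda>k. zs k + t * h2 k) j))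
             \<in> O[at_right 0](\<lambda>t. t\<^sup>2))"
proof (intro allI impI)
  fix i j :: nat and h1 h2 :: "nat \<Rightarrow> real"
  assume i: "i < N" and j: "j < N" and ij: "i \<noteq> j"
  interpret P: prob_space R by (rule R_prob)
  have sR: "sets R = sets borel" by (simp add: R_def)
  obtain Mb where Mb: "Mb > 0" "\<And>y. y \<in> Y \<Longrightarrow> norm y \<le> Mb"
    using compact_imp_bounded[OF Y_compact] bounded_pos by metis
  obtain Bp where Bp: "Bp > 0" "\<And>y. y \<in> Y \<Longrightarrow> \<rho> y \<le> Bp"
  proof -
    have "bounded (\<rho> ` Y)"
      by (rule compact_imp_bounded, rule compact_continuous_image[OF rho_cont Y_compact])
    then obtain b where b: "b > 0" "\<forall>v\<in>\<rho> ` Y. norm v \<le> b"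
      unfolding bounded_pos by blast
    have "\<rho> y \<le> b" if "y \<in> Y" for y
      using b(2) that by fastforce
    then show ?thesis using that[of b] b(1) by blast
  qed
  have AEY: "AE y in R. y \<in> Y"
  proof -
    have "(\<lambda>y. ennreal (\<rho> y)) \<in> borel_measurable lborel" using rho_meas by measurable
    then show ?thesis unfolding R_def
      by (subst AE_density) (auto intro!: AE_I2 intro: ccontr simp: rho_zero)
  qed
  have integ: "integrable R (\<lambda>y. Min ((\<lambda>l. (norm (y - x l))\<^sup>2 / 2 - z l) ` {..<N}))" for z
  proof (rule P.integrable_const_bound[where B = "\<Sum>l<N. (Mb + norm (x l))\<^sup>2 / 2 + \<bar>z l\<bar>"])
    show "AE y in R. norm (Min ((\<lambda>l. (norm (y - x l))\<^sup>2 / 2 - z l) ` {..<N})) \<le> (\<Sum>l<N. (Mb + norm (x l))\<^sup>2 / 2 + \<bar>z l\<bar>)"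
      using AEY
    proof (rule AE_mp, intro AE_I2 impI)
      fix y assume yY: "y \<in> Y"
      have "Min ((\<lambda>l. (norm (y - x l))\<^sup>2 / 2 - z l) ` {..<N}) \<in> (\<lambda>l. (norm (y - x l))\<^sup>2 / 2 - z l) ` {..<N}"
        by (rule Min_in) (use i in auto)
      then obtain l0 where l0: "l0 < N" "Min ((\<lambda>l. (norm (y - x l))\<^sup>2 / 2 - z l) ` {..<N}) = (norm (y - x l0))\<^sup>2 / 2 - z l0"
        by auto
      have bd: "\<bar>(norm (y - x l))\<^sup>2 / 2 - z l\<bar> \<le> (Mb + norm (x l))\<^sup>2 / 2 + \<bar>z l\<bar>" for l
      proof -
        have "norm (y - x l) \<le> Mb + norm (x l)" using Mb(2)[OF yY] norm_triangle_ineq4[of y "x l"] by linarith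
        then have "(norm (y - x l))\<^sup>2 \<le> (Mb + norm (x l))\<^sup>2" by (intro power_mono) auto
        moreover have "(norm (y - x l))\<^sup>2 \<ge> 0" by simp
        ultimately show ?thesis unfolding abs_le_iff using abs_ge_self[of "z l"] abs_ge_minus_self[of "z l"] by linarith
      qed
      have "\<bar>(norm (y - x l0))\<^sup>2 / 2 - z l0\<bar> \<le> (Mb + norm (x l0))\<^sup>2 / 2 + \<bar>z l0\<bar>" by (rule bd)
      also have "\<dots> \<le> (\<Sum>l<N. (Mb + norm (x l))\<^sup>2 / 2 + \<bar>z l\<bar>)"
        by (rule member_le_sum[where f = "\<lambda>l. (Mb + norm (x l))\<^sup>2 / 2 + \<bar>z l\<bar>"]) (use l0 in auto)
      finally show "norm (Min ((\<lambda>l. (norm (y - x l))\<^sup>2 / 2 - z l) ` {..<N})) \<le> (\<Sum>l<N. (Mb + norm (x l))\<^sup>2 / 2 + \<bar>z l\<bar>)"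
        using l0 by simp
    qed
    have "(\<lambda>y. Min ((\<lambda>l. (norm (y - x l))\<^sup>2 / 2 - z l) ` {..<N})) \<in> borel_measurable borel"
      by measurable
    then show "(\<lambda>y. Min ((\<lambda>l. (norm (y - x l))\<^sup>2 / 2 - z l) ` {..<N})) \<in> borel_measurable R"
      unfolding measurable_cong_sets[OF sR refl] .
  qed
  have mass: "p m \<le> measure R (cell N x zs m)" if "m < N" for m
    by (rule opt_cell_mass[OF _ sR integ opt that]) (rule P.finite_measure_axioms)
  show "(\<forall>t>0. cell N x (\<lambda>k. zs k + t * h1 k) i \<inter> cell N x (\<lambda>k. zs k + t * h2 k) j
                    \<subseteq> Dset N x zs i j h1 h2 t)
         \<and> (\<lambda>t. measure R (Dset N x zs i j h1 h2 t - cell N x (\<lambda>k. zs k + t * h2 k) j))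
             \<in> O[at_right 0](\<lambda>t. t\<^sup>2)"
  proof
    show "\<forall>t>0. cell N x (\<lambda>k. zs k + t * h1 k) i \<inter> cell N x (\<lambda>k. zs k + t * h2 k) j
                    \<subseteq> Dset N x zs i j h1 h2 t"
    proof (intro allI impI subsetI)
      fix t y assume t: "t > 0" and y: "y \<in> cell N x (\<lambda>k. zs k + t * h1 k) i \<inter> cell N x (\<lambda>k. zs k + t * h2 k) j"
      then have "(x j - x i) \<bullet> y \<ge> bij_coef x (\<lambda>k. zs k + t * h2 k) j i"
        using i ij unfolding cell_def by auto
      then have "(x i - x j) \<bullet> y - bij_coef x zs i j \<le> t * (h2 j - h2 i)"
        unfolding bij_coef_def by (simp add: inner_diff_left field_simps)
      then show "y \<in> Dset N x zs i j h1 h2 t"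
        using y unfolding Dset_def by auto
    qed
    show "(\<lambda>t. measure R (Dset N x zs i j h1 h2 t - cell N x (\<lambda>k. zs k + t * h2 k) j))
             \<in> O[at_right 0](\<lambda>t. t\<^sup>2)"
    proof -
      define H where "H = (\<Sum>l<N. \<bar>h1 l\<bar> + \<bar>h2 l\<bar>)"
      have H1: "\<bar>h1 l\<bar> \<le> H" "\<bar>h2 l\<bar> \<le> H" if "l < N" for l
      proof -
        have "\<bar>h1 l\<bar> + \<bar>h2 l\<bar> \<le> H" unfolding H_def
          by (rule member_le_sum[where f = "\<lambda>l. \<bar>h1 l\<bar> + \<bar>h2 l\<bar>"]) (use that in auto)
        then show "\<bar>h1 l\<bar> \<le> H" "\<bar>h2 l\<bar> \<le> H" by auto
      qed
      have H0: "H \<ge> 0" unfolding H_def by (intro sum_nonneg) auto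
      have tH: "\<bar>t * h1 l\<bar> \<le> H * t" "\<bar>t * h2 l\<bar> \<le> H * t" if "l < N" "t > 0" for l t
        using H1[OF that(1)] that(2) by (auto simp: abs_mult mult.commute intro: mult_right_mono)
      define a where "a = x i - x j"
      define bc where "bc = bij_coef x zs"
      define S where "S k t = {y. \<bar>a \<bullet> y - bc i j\<bar> \<le> 2 * (H * t) \<and> \<bar>(x i - x k) \<bullet> y - bc i k\<bar> \<le> 2 * (H * t)}" for k t
      define K where "K = {k. k < N \<and> k \<noteq> i \<and> k \<noteq> j}"
      have finK: "finite K" unfolding K_def by auto
      have Sborel: "S k t \<in> sets borel" for k t unfolding S_def by measurable
      have inner_split: "(x i - x k) \<bullet> y = (x i - x j) \<bullet> y + (x j - x k) \<bullet> y" for k y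
        by (simp add: inner_diff_left)
      have inner_neg: "(x j - x i) \<bullet> y = - ((x i - x j) \<bullet> y)" for y
        by (simp add: inner_diff_left)
      have incl: "Dset N x zs i j h1 h2 t - cell N x (\<lambda>k. zs k + t * h2 k) j \<subseteq> (\<Union>k\<in>K. S k t)"
        if t: "t > 0" for t
      proof
        fix y assume y: "y \<in> Dset N x zs i j h1 h2 t - cell N x (\<lambda>k. zs k + t * h2 k) j"
        then have yi: "\<forall>k<N. k \<noteq> i \<longrightarrow> bij_coef x (\<lambda>k. zs k + t * h1 k) i k \<le> (x i - x k) \<bullet> y"
          and yD: "(x i - x j) \<bullet> y - bij_coef x zs i j \<le> t * (h2 j - h2 i)"
          and ynj: "\<not> (\<forall>k<N. k \<noteq> j \<longrightarrow> bij_coef x (\<lambda>k. zs k + t * h2 k) j k \<le> (x j - x k) \<bullet> y)"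
          unfolding Dset_def cell_def by auto
        then obtain k where k: "k < N" "k \<noteq> j" "(x j - x k) \<bullet> y < bij_coef x (\<lambda>k. zs k + t * h2 k) j k"
          by auto
        have ki: "k \<noteq> i"
        proof
          assume "k = i"
          with k(3) yD show False
            unfolding bij_shift inner_neg bij_coef_rel(1)[of x zs i j] by (simp add: algebra_simps)
        qed
        have A1: "bij_coef x zs i j - t * h1 i + t * h1 j \<le> (x i - x j) \<bullet> y"
          using yi j ij unfolding bij_shift by auto
        have A2: "bij_coef x zs i k - t * h1 i + t * h1 k \<le> (x i - x k) \<bullet> y"
          using yi k ki unfolding bij_shift by auto
        have A3: "(x j - x k) \<bullet> y < bij_coef x zs j k - t * h2 j + t * h2 k"
          using k(3) unfolding bij_shift .
        have rel: "bij_coef x zs i j + bij_coef x zs j k = bij_coef x zs i k" by (rule bij_coef_rel(2))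
        have sp: "(x i - x k) \<bullet> y = (x i - x j) \<bullet> y + (x j - x k) \<bullet> y" by (rule inner_split)
        have b1: "\<bar>t * h1 i\<bar> \<le> H * t" "\<bar>t * h1 j\<bar> \<le> H * t" "\<bar>t * h1 k\<bar> \<le> H * t"
          "\<bar>t * h2 i\<bar> \<le> H * t" "\<bar>t * h2 j\<bar> \<le> H * t" "\<bar>t * h2 k\<bar> \<le> H * t"
          using tH i j k(1) t by auto
        have yD': "(x i - x j) \<bullet> y - bij_coef x zs i j \<le> t * h2 j - t * h2 i"
          using yD by (simp add: algebra_simps)
        have "y \<in> S k t"
          unfolding S_def a_def bc_def mem_Collect_eq abs_le_iff
          using A1 A2 A3 rel sp b1 yD' by (simp only: abs_le_iff) linarith
        moreover have "k \<in> K" using k ki unfolding K_def by auto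
        ultimately show "y \<in> (\<Union>k\<in>K. S k t)" by blast
      qed
      have a0: "a \<noteq> 0" using x_distinct i j ij unfolding a_def inj_on_def by auto
      have per: "\<exists>C. eventually (\<lambda>t. measure R (S k t) \<le> C * t\<^sup>2) (at_right 0)" if kK: "k \<in> K" for k
      proof -
        have k: "k < N" "k \<noteq> i" "k \<noteq> j" using kK unfolding K_def by auto
        define b where "b = x i - x k"
        have b0: "b \<noteq> 0" using x_distinct i k unfolding b_def inj_on_def by auto
        show ?thesis
        proof (cases "\<exists>\<mu>. b = \<mu> *\<^sub>R a")
          case True
          then obtain \<mu> where \<mu>: "b = \<mu> *\<^sub>R a" by blast
          have ib: "(x i - x k) \<bullet> y = \<mu> * (a \<bullet> y)" for y
            using \<mu> unfolding b_def by simp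
          show ?thesis
          proof (cases "bc i k = \<mu> * bc i j")
            case True
            have \<mu>0: "\<mu> \<noteq> 0" using \<mu> b0 by auto
            have \<mu>1: "\<mu> \<noteq> 1"
            proof
              assume "\<mu> = 1"
              then have "x k = x j" using \<mu> unfolding a_def b_def by simp
              then show False using x_distinct j k unfolding inj_on_def by auto
            qed
            have rel1: "bc k i = - bc i k" "bc j i = - bc i j" unfolding bc_def by (rule bij_coef_rel(1))+
            have rel2: "bc k i + bc i j = bc k j" "bc j i + bc i k = bc j k" unfolding bc_def by (rule bij_coef_rel(2))+
            have i1: "(x k - x i) \<bullet> y = - (\<mu> * (a \<bullet> y))" for y
              using ib[of y] by (simp add: inner_diff_left)
            have i2: "(x k - x j) \<bullet> y = (1 - \<mu>) * (a \<bullet> y)" for y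
              using ib[of y] by (simp add: a_def inner_diff_left algebra_simps)
            have i3: "(x j - x k) \<bullet> y = (\<mu> - 1) * (a \<bullet> y)" for y
              using ib[of y] by (simp add: a_def inner_diff_left algebra_simps)
            have i4: "(x j - x i) \<bullet> y = - (a \<bullet> y)" for y
              by (simp add: a_def inner_diff_left)
            obtain m where m: "m < N" "cell N x zs m \<subseteq> {y. a \<bullet> y = bc i j}"
            proof (cases "\<mu> < 0")
              case True
              have "cell N x zs i \<subseteq> {y. a \<bullet> y = bc i j}"
              proof
                fix y assume "y \<in> cell N x zs i"
                then have c1: "bc i j \<le> a \<bullet> y" and c2: "bc i k \<le> (x i - x k) \<bullet> y"
                  using j k ij unfolding cell_def bc_def a_def by auto
                have "\<mu> * bc i j \<le> \<mu> * (a \<bullet> y)" using c2 ib[of y] \<open>bc i k = \<mu> * bc i j\<close> by simp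
                then have "a \<bullet> y \<le> bc i j" using True by (simp add: mult_le_cancel_left)
                then show "y \<in> {y. a \<bullet> y = bc i j}" using c1 by simp
              qed
              then show ?thesis using that i by blast
            next
              case False
              then have \<mu>pos: "\<mu> > 0" using \<mu>0 by simp
              show ?thesis
              proof (cases "\<mu> < 1")
                case True
                have "cell N x zs k \<subseteq> {y. a \<bullet> y = bc i j}"
                proof
                  fix y assume "y \<in> cell N x zs k"
                  then have c1: "bc k i \<le> (x k - x i) \<bullet> y" and c2: "bc k j \<le> (x k - x j) \<bullet> y"
                    using i j k unfolding cell_def bc_def by auto
                  have "- (\<mu> * bc i j) \<le> - (\<mu> * (a \<bullet> y))" using c1 i1[of y] rel1 \<open>bc i k = \<mu> * bc i j\<close> by simp
                  then have le1: "a \<bullet> y \<le> bc i j" using \<mu>pos by (simp add: mult_le_cancel_left)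
                  have "bc k j = (1 - \<mu>) * bc i j" using rel1 rel2 \<open>bc i k = \<mu> * bc i j\<close> by (simp add: algebra_simps)
                  then have "(1 - \<mu>) * bc i j \<le> (1 - \<mu>) * (a \<bullet> y)" using c2 i2[of y] by simp
                  then have "bc i j \<le> a \<bullet> y" using True by (simp add: mult_le_cancel_left)
                  then show "y \<in> {y. a \<bullet> y = bc i j}" using le1 by simp
                qed
                then show ?thesis using that k by blast
              next
                case False
                then have \<mu>gt: "\<mu> > 1" using \<mu>1 by simp
                have "cell N x zs j \<subseteq> {y. a \<bullet> y = bc i j}"
                proof
                  fix y assume "y \<in> cell N x zs j"
                  then have c1: "bc j i \<le> (x j - x i) \<bullet> y" and c2: "bc j k \<le> (x j - x k) \<bullet> y"
                    using i j k ij unfolding cell_def bc_def by auto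
                  have le1: "a \<bullet> y \<le> bc i j" using c1 i4[of y] rel1 by simp
                  have "bc j k = (\<mu> - 1) * bc i j" using rel1 rel2 \<open>bc i k = \<mu> * bc i j\<close> by (simp add: algebra_simps)
                  then have "(\<mu> - 1) * bc i j \<le> (\<mu> - 1) * (a \<bullet> y)" using c2 i3[of y] by simp
                  then have "bc i j \<le> a \<bullet> y" using \<mu>gt by (simp add: mult_le_cancel_left)
                  then show "y \<in> {y. a \<bullet> y = bc i j}" using le1 by simp
                qed
                then show ?thesis using that j by blast
              qed
            qed
            have "p m \<le> measure R (cell N x zs m)" by (rule mass[OF m(1)])
            also have "\<dots> \<le> measure R {y. a \<bullet> y = bc i j}"
              by (rule P.finite_measure_mono[OF m(2)]) (simp add: sR)
            also have "\<dots> = 0" unfolding R_def by (rule R_null_hyperplane[OF rho_meas a0])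
            finally show ?thesis using p_pos[OF m(1)] by simp
          next
            case False
            define g where "g = \<bar>bc i k - \<mu> * bc i j\<bar>"
            have g0: "g > 0" using False unfolding g_def by simp
            define den where "den = 2 * H * (1 + \<bar>\<mu>\<bar>) + 1"
            have den0: "den > 0" unfolding den_def using H0 by (simp add: add_nonneg_pos)
            have "eventually (\<lambda>t. measure R (S k t) \<le> 0 * t\<^sup>2) (at_right 0)"
              unfolding eventually_at_right_field
            proof (intro exI conjI allI impI)
              show "(0::real) < g / den" using g0 den0 by simp
              fix t :: real assume t0: "0 < t" and tl: "t < g / den"
              have "S k t = {}"
              proof (rule ccontr)
                assume "S k t \<noteq> {}"
                then obtain y where y: "\<bar>a \<bullet> y - bc i j\<bar> \<le> 2 * (H * t)" "\<bar>\<mu> * (a \<bullet> y) - bc i k\<bar> \<le> 2 * (H * t)"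
                  unfolding S_def ib by auto
                have "g = \<bar>(\<mu> * (a \<bullet> y) - bc i k) - \<mu> * (a \<bullet> y - bc i j)\<bar>"
                  unfolding g_def by (simp add: algebra_simps abs_minus_commute)
                also have "\<dots> \<le> \<bar>\<mu> * (a \<bullet> y) - bc i k\<bar> + \<bar>\<mu>\<bar> * \<bar>a \<bullet> y - bc i j\<bar>"
                  by (metis abs_mult abs_triangle_ineq4)
                also have "\<dots> \<le> 2 * (H * t) + \<bar>\<mu>\<bar> * (2 * (H * t))"
                  using y by (intro add_mono mult_left_mono) auto
                also have "\<dots> = t * (den - 1)" unfolding den_def by (simp add: algebra_simps)
                also have "\<dots> < t * den" using t0 by simp
                also have "\<dots> < g" using tl den0 t0 by (simp add: field_simps)
                finally have "g < g" .
                then show False by simp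
              qed
              then show "measure R (S k t) \<le> 0 * t\<^sup>2" by simp
            qed
            then show ?thesis by blast
          qed
        next
          case False
          obtain Kc where Kc: "Kc \<ge> 0" "\<And>r \<alpha> \<beta>. r \<ge> 0 \<Longrightarrow>
             emeasure lborel {y. \<bar>a \<bullet> y - \<alpha>\<bar> \<le> r \<and> \<bar>b \<bullet> y - \<beta>\<bar> \<le> r \<and> (\<forall>c\<in>Basis. \<bar>y \<bullet> c\<bar> \<le> Mb)}
               \<le> ennreal (Kc * r\<^sup>2)"
            using slab_general[OF a0 False, of Mb] Mb(1) by auto
          have "eventually (\<lambda>t. measure R (S k t) \<le> (Bp * Kc * 4 * H\<^sup>2) * t\<^sup>2) (at_right 0)"
            using eventually_at_right_less
          proof (rule eventually_mono)
            fix t :: real assume t0: "0 < t"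
            have "measure R (S k t) \<le> Bp * (Kc * (2 * (H * t))\<^sup>2)"
              unfolding R_def
            proof (rule R_slab_bound[OF rho_meas rho_nonneg rho_zero Bp(2) _ Sborel])
              show "Bp \<ge> 0" using Bp(1) by simp
              show "{y. \<bar>a \<bullet> y - bc i j\<bar> \<le> 2 * (H * t) \<and> \<bar>b \<bullet> y - bc i k\<bar> \<le> 2 * (H * t) \<and> (\<forall>c\<in>Basis. \<bar>y \<bullet> c\<bar> \<le> Mb)} \<in> sets borel"
                by measurable
              show "S k t \<inter> Y \<subseteq> {y. \<bar>a \<bullet> y - bc i j\<bar> \<le> 2 * (H * t) \<and> \<bar>b \<bullet> y - bc i k\<bar> \<le> 2 * (H * t) \<and> (\<forall>c\<in>Basis. \<bar>y \<bullet> c\<bar> \<le> Mb)}"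
              proof
                fix y assume "y \<in> S k t \<inter> Y"
                moreover have "\<bar>y \<bullet> c\<bar> \<le> Mb" if "c \<in> Basis" "y \<in> Y" for c
                  using Basis_le_norm[OF that(1), of y] Mb(2)[OF that(2)] by linarith
                ultimately show "y \<in> {y. \<bar>a \<bullet> y - bc i j\<bar> \<le> 2 * (H * t) \<and> \<bar>b \<bullet> y - bc i k\<bar> \<le> 2 * (H * t) \<and> (\<forall>c\<in>Basis. \<bar>y \<bullet> c\<bar> \<le> Mb)}"
                  unfolding S_def b_def by auto
              qed
              show "Kc * (2 * (H * t))\<^sup>2 \<ge> 0" using Kc(1) by simp
              show "emeasure lborel {y. \<bar>a \<bullet> y - bc i j\<bar> \<le> 2 * (H * t) \<and> \<bar>b \<bullet> y - bc i k\<bar> \<le> 2 * (H * t) \<and> (\<forall>c\<in>Basis. \<bar>y \<bullet> c\<bar> \<le> Mb)}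
                  \<le> ennreal (Kc * (2 * (H * t))\<^sup>2)"
                by (rule Kc(2)) (use H0 t0 in simp)
            qed
            also have "\<dots> = (Bp * Kc * 4 * H\<^sup>2) * t\<^sup>2" by (simp add: power2_eq_square algebra_simps)
            finally show "measure R (S k t) \<le> (Bp * Kc * 4 * H\<^sup>2) * t\<^sup>2" .
          qed
          then show ?thesis by blast
        qed
      qed
      then have "\<forall>k\<in>K. \<exists>C. eventually (\<lambda>t. measure R (S k t) \<le> C * t\<^sup>2) (at_right 0)" by blast
      then obtain C where C: "\<forall>k\<in>K. eventually (\<lambda>t. measure R (S k t) \<le> C k * t\<^sup>2) (at_right 0)"
        by (metis bchoice)
      have ev: "eventually (\<lambda>t. \<forall>k\<in>K. measure R (S k t) \<le> C k * t\<^sup>2) (at_right (0::real))"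
        by (rule eventually_ball_finite[OF finK C])
      show ?thesis
      proof (rule bigoI[where c = "\<Sum>k\<in>K. C k"])
        show "eventually (\<lambda>t. norm (measure R (Dset N x zs i j h1 h2 t - cell N x (\<lambda>k. zs k + t * h2 k) j))
            \<le> (\<Sum>k\<in>K. C k) * norm (t\<^sup>2)) (at_right 0)"
          using eventually_conj[OF ev eventually_at_right_less]
        proof (rule eventually_mono)
          fix t :: real assume tt: "(\<forall>k\<in>K. measure R (S k t) \<le> C k * t\<^sup>2) \<and> 0 < t"
          have "measure R (Dset N x zs i j h1 h2 t - cell N x (\<lambda>k. zs k + t * h2 k) j) \<le> measure R (\<Union>k\<in>K. S k t)"
            by (rule P.finite_measure_mono[OF incl]) (use tt Sborel finK sR in auto)
          also have "\<dots> \<le> (\<Sum>k\<in>K. measure R (S k t))"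
            by (rule P.finite_measure_subadditive_finite) (use finK Sborel sR in auto)
          also have "\<dots> \<le> (\<Sum>k\<in>K. C k * t\<^sup>2)"
            by (rule sum_mono) (use tt in auto)
          also have "\<dots> = (\<Sum>k\<in>K. C k) * norm (t\<^sup>2)" by (simp add: sum_distrib_right)
          finally show "norm (measure R (Dset N x zs i j h1 h2 t - cell N x (\<lambda>k. zs k + t * h2 k) j))
            \<le> (\<Sum>k\<in>K. C k) * norm (t\<^sup>2)" by simp
        qed
      qed
    qed
  qed
qed

end
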